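(* Let $n,N,L\ge 1$ be integers, $0<p<1$ and $0<\epsilon_2<1$. Define $$N_{\mathsf{Th}}=\frac{\log_2\left(\left(\frac{\epsilon_2+2^{n}}{2^{n}}\right)^{1/n}-1\right)}{\log_2(p)}.$$ If $N\ge N_{\mathsf{Th}}$, then in the random model described in the context, with probability at least $1-\epsilon_2$ the set $\mathbb{L}_{\mathcal{P}^*,\mathcal{Y}}$ of labellings of the true partitioning equals $\{\mathcal{L}^*\}$.
   Context: Model: Let $M=2^n$ and $C=\{0,1\}^n=\{\mathbf{x}_1,\dots,\mathbf{x}_M\}$ (addresses). Data parts $\mathbf{d}_1,\dots,\mathbf{d}_M$ are independent and uniform on $\{0,1\}^L$; strand $i$ is $(\mathbf{x}_i,\mathbf{d}_i)$. Each strand is transmitted $N$ times through $\mathsf{BEC}(p)$ (each symbol independently replaced by $*$ with probability $p$, independently across transmissions and strands); $\mathcal{S}_N((\mathbf{x}_i,\mathbf{d}_i))$ is the multiset of the $N$ reads of strand $i$ and $\mathcal{Y}$ the multiset of all $MN$ reads. An address $\mathbf{x}$ is compatible with a read $(\mathbf{y},\mathbf{d}')$ if $\mathbf{x}$ and $\mathbf{y}$ coincide at all non-erased positions of $\mathbf{y}$. The true partitioning is $\mathcal{P}^*=\{P_1,\dots,P_M\}$ with $P_i=\mathcal{S}_N((\mathbf{x}_i,\mathbf{d}_i))$. A labelling of $\mathcal{P}^*$ is a vector $\mathcal{L}$ of $M$ distinct addresses from $C$ such that, for each $i\in[M]$, $\mathcal{L}[i]$ is compatible with every read in $P_i$; $\mathbb{L}_{\mathcal{P}^*,\mathcal{Y}}$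 is the set of all such labellings, and the true labelling $\mathcal{L}^*$ has $\mathcal{L}^*[i]=\mathbf{x}_i$ for all $i$. *)

theory Defs
  imports "HOL-Probability.Probability" "HOL-Library.Multiset"
begin

text \<open>Binary words are lists of booleans; a received symbol is a bool option,
  where None stands for the erasure symbol *.\<close>

type_synonym word = "bool list"
type_synonym rword = "bool option list"
type_synonym read = "rword \<times> rword"   \<comment> \<open>(address part, data part)\<close>

primrec seq_pmf :: "'a pmf list \<Rightarrow> 'a list pmf" where
  "seq_pmf [] = return_pmf []"
| "seq_pmf (q # qs) = do {x \<leftarrow> q; xs \<leftarrow> seq_pmf qs; return_pmf (x # xs)}"

definition bec_word :: "real \<Rightarrow> word \<Rightarrow> rword pmf" where
  "bec_word p w = map_pmf (\<lambda>es. map2 (\<lambda>e b. if e then None else Some b) es w)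
                     (replicate_pmf (length w) (bernoulli_pmf p))"

definition bec_strand :: "real \<Rightarrow> word \<times> word \<Rightarrow> read pmf" where
  "bec_strand p s = do {y \<leftarrow> bec_word p (fst s); d' \<leftarrow> bec_word p (snd s); return_pmf (y, d')}"

definition reads_pmf :: "real \<Rightarrow> nat \<Rightarrow> word \<times> word \<Rightarrow> read multiset pmf" where
  "reads_pmf p N s = map_pmf mset (replicate_pmf N (bec_strand p s))"

text \<open>The outcome is the true
  partitioning P* = [P_0, ..., P_{M-1}], P_i = S_N((x_i, d_i)).\<close>
definition partition_pmf ::
  "nat \<Rightarrow> nat \<Rightarrow> nat \<Rightarrow> real \<Rightarrow> (nat \<Rightarrow> word) \<Rightarrow> read multiset list pmf" where
  "partition_pmf n L N p addr =
     seq_pmf (map (\<lambda>i. do {d \<leftarrow> pmf_of_set {d :: word. length d = L};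
                            reads_pmf p N (addr i, d)}) [0..<2 ^ n])"

definition addrs :: "nat \<Rightarrow> word set" where
  "addrs n = {x. length x = n}"

definition compatible :: "word \<Rightarrow> read \<Rightarrow> bool" where
  "compatible x r = list_all2 (\<lambda>a b. b = None \<or> b = Some a) x (fst r)"

definition labellings :: "nat \<Rightarrow> read multiset list \<Rightarrow> word list set" where
  "labellings n Ps = {Lab. length Lab = 2 ^ n \<and> distinct Lab \<and> set Lab \<subseteq> addrs n \<and>
      (\<forall>i < 2 ^ n. \<forall>r \<in># Ps ! i. compatible (Lab ! i) r)}"

end

theory Submission
  imports Defs
begin

lemma seq_pmf_nth:
  "i < length qs \<Longrightarrow> map_pmf (\<lambda>xs. xs ! i) (seq_pmf qs) = qs ! i"
proof (induction qs arbitrary: i)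
  case Nil then show ?case by simp
next
  case (Cons q qs)
  show ?case
  proof (cases i)
    case 0 then show ?thesis
      by (simp add: map_bind_pmf bind_return_pmf' map_return_pmf)
  next
    case (Suc k)
    have "map_pmf (\<lambda>xs. xs ! i) (seq_pmf (q # qs)) = bind_pmf q (\<lambda>x. map_pmf (\<lambda>xs. xs ! k) (seq_pmf qs))"
      using Suc by (simp add: map_bind_pmf map_return_pmf bind_return_pmf' map_pmf_def[symmetric] pmf.map_comp o_def)
    then show ?thesis using Cons Suc by simp
  qed
qed

lemma set_seq_pmf:
  "xs \<in> set_pmf (seq_pmf qs) \<Longrightarrow> length xs = length qs \<and> (\<forall>i < length qs. xs ! i \<in> set_pmf (qs ! i))"
proof (induction qs arbitrary: xs)
  case Nil then show ?case by simp
next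
  case (Cons q qs)
  then show ?case by (auto simp: nth_Cons split: nat.splits)
qed

lemma replicate_seq: "replicate_pmf N q = seq_pmf (replicate N q)"
  by (induction N) auto

lemma map_replicate_pmf: "map_pmf (map f) (replicate_pmf N q) = replicate_pmf N (map_pmf f q)"
proof (induction N)
  case (Suc N)
  show ?case
    by (simp add: Suc[symmetric] map_bind_pmf bind_map_pmf map_return_pmf)
qed simp

lemma all_bernoulli:
  assumes "0 \<le> a" "a \<le> 1"
  shows "map_pmf (list_all id) (replicate_pmf N (bernoulli_pmf a)) = bernoulli_pmf (a ^ N)"
proof (induction N)
  case 0 then show ?case
    by (rule pmf_eqI) (auto simp: pmf_bernoulli_True split: split_indicator)
next
  case (Suc N)
  have "map_pmf (list_all id) (replicate_pmf (Suc N) (bernoulli_pmf a))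
     = bind_pmf (bernoulli_pmf a) (\<lambda>b. map_pmf (\<lambda>c. b \<and> c) (map_pmf (list_all id) (replicate_pmf N (bernoulli_pmf a))))"
    by (simp add: map_bind_pmf map_return_pmf bind_return_pmf' map_pmf_def[symmetric] pmf.map_comp o_def)
  also have "\<dots> = bernoulli_pmf (a ^ Suc N)"
    unfolding Suc
    apply (rule pmf_eqI)
    using assms by (auto simp: pmf_bind pmf_map vimage_def power_le_one measure_pmf_single mult_le_one algebra_simps)
  finally show ?case .
qed

lemma bec_word_nth:
  assumes "0 \<le> p" "p \<le> 1" "j < length x"
  shows "map_pmf (\<lambda>y. y ! j = None) (bec_word p x) = bernoulli_pmf p"
proof -
  have "map_pmf (\<lambda>y. y ! j = None) (bec_word p x)
      = map_pmf (\<lambda>es. es ! j) (replicate_pmf (length x) (bernoulli_pmf p))"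
    unfolding bec_word_def pmf.map_comp
    by (rule map_pmf_cong) (use assms in \<open>auto simp: set_replicate_pmf\<close>)
  also have "\<dots> = bernoulli_pmf p"
    using assms by (simp add: replicate_seq seq_pmf_nth)
  finally show ?thesis .
qed

lemma set_bec_word:
  assumes "y \<in> set_pmf (bec_word p x)"
  shows "list_all2 (\<lambda>a b. b = None \<or> b = Some a) x y"
proof -
  from assms obtain es where es: "length es = length x" "y = map2 (\<lambda>e b. if e then None else Some b) es x"
    by (auto simp: bec_word_def set_replicate_pmf)
  then show ?thesis by (auto simp: list_all2_conv_all_nth)
qed

lemma bec_strand_nth:
  assumes "0 \<le> p" "p \<le> 1" "j < length x"
  shows "map_pmf (\<lambda>r. fst r ! j = None) (bec_strand p (x, d)) = bernoulli_pmf p"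
proof -
  have "map_pmf (\<lambda>r. fst r ! j = None) (bec_strand p (x, d)) = map_pmf (\<lambda>y. y ! j = None) (bec_word p x)"
    unfolding bec_strand_def
    by (simp add: map_bind_pmf map_return_pmf bind_return_pmf' map_pmf_def[symmetric] pmf.map_comp o_def)
  then show ?thesis using bec_word_nth[OF assms] by simp
qed

lemma reads_bad:
  assumes "0 \<le> p" "p \<le> 1" "j < length x"
  shows "map_pmf (\<lambda>M. \<forall>r\<in>#M. fst r ! j = None) (reads_pmf p N (x, d)) = bernoulli_pmf (p ^ N)"
proof -
  have "map_pmf (\<lambda>M. \<forall>r\<in>#M. fst r ! j = None) (reads_pmf p N (x, d))
     = map_pmf (list_all id) (map_pmf (map (\<lambda>r. fst r ! j = None)) (replicate_pmf N (bec_strand p (x, d))))"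
    unfolding reads_pmf_def pmf.map_comp by (rule map_pmf_cong) (auto simp: list_all_iff)
  also have "\<dots> = bernoulli_pmf (p ^ N)"
    unfolding map_replicate_pmf bec_strand_nth[OF assms] using assms by (intro all_bernoulli)
  finally show ?thesis .
qed

lemma set_reads:
  assumes "M \<in> set_pmf (reads_pmf p N (x, d))" "r \<in># M"
  shows "list_all2 (\<lambda>a b. b = None \<or> b = Some a) x (fst r)"
proof -
  from assms obtain xs where "r \<in> set xs" "\<forall>r\<in>set xs. r \<in> set_pmf (bec_strand p (x, d))"
    by (auto simp: reads_pmf_def set_replicate_pmf)
  then have "r \<in> set_pmf (bec_strand p (x, d))" by blast
  then have "fst r \<in> set_pmf (bec_word p x)" by (auto simp: bec_strand_def)
  then show ?thesis by (rule set_bec_word)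
qed

lemma unique_addr:
  assumes "length x = n" "length y = n"
    and "\<forall>j<n. \<exists>r\<in>#M. fst r ! j \<noteq> None"
    and "\<forall>r\<in>#M. list_all2 (\<lambda>a b. b = None \<or> b = Some a) y (fst r)"
    and "\<forall>r\<in>#M. list_all2 (\<lambda>a b. b = None \<or> b = Some a) x (fst r)"
  shows "x = y"
proof (rule nth_equalityI)
  show "length x = length y" using assms by simp
  fix j assume "j < length x"
  then have j: "j < n" using assms by simp
  then obtain r where r: "r \<in># M" "fst r ! j \<noteq> None" using assms(3) by blast
  have "fst r ! j = Some (y ! j)" using assms(4) r j assms(2) list_all2_nthD by fastforce
  moreover have "fst r ! j = Some (x ! j)" using assms(5) r j assms(1) list_all2_nthD by fastforce
  ultimately show "x ! j = y ! j" by simp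
qed

lemma arith_part:
  fixes n N :: nat and p eps2 :: real
  assumes "n \<ge> 1" "0 < p" "p < 1" "0 < eps2"
    and "real N \<ge> log 2 (((eps2 + 2 ^ n) / 2 ^ n) powr (1 / real n) - 1) / log 2 p"
  shows "2 ^ n * real n * p ^ N \<le> eps2"
proof -
  define a :: real where "a = (eps2 + 2 ^ n) / 2 ^ n"
  have a1: "a > 1" using assms by (simp add: a_def field_simps)
  define t where "t = a powr (1 / real n) - 1"
  have "a powr (1 / real n) > 1" using a1 assms by (intro gr_one_powr) auto
  then have t0: "t > 0" by (simp add: t_def)
  have lp: "log 2 p < 0" using assms by simp
  have "real N * log 2 p \<le> log 2 t"
    using assms(5) lp unfolding a_def[symmetric] t_def[symmetric]
    by (simp add: pos_divide_le_eq neg_divide_le_eq mult.commute)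
  then have "log 2 (p ^ N) \<le> log 2 t" using assms by (simp add: log_nat_power)
  then have pt: "p ^ N \<le> t" using assms t0 by simp
  have "(1 + p ^ N) ^ n \<le> (1 + t) ^ n" using pt assms by (intro power_mono) auto
  also have "(1 + t) ^ n = a"
    using a1 assms by (simp add: t_def powr_realpow[symmetric] powr_powr)
  finally have "1 + real n * p ^ N \<le> a"
    using Bernoulli_inequality[of "p ^ N" n] assms by (smt (verit) zero_le_power)
  then have "real n * p ^ N \<le> eps2 / 2 ^ n" by (simp add: a_def field_simps)
  then show ?thesis by (simp add: field_simps)
qed

theorem lemma4:
  fixes n N L :: nat and p eps2 :: real and addr :: "nat \<Rightarrow> bool list"
  assumes "n \<ge> 1" and "N \<ge> 1" and "L \<ge> 1"
    and "0 < p" and "p < 1" and "0 < eps2" and "eps2 < 1"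
    and "bij_betw addr {..<2 ^ n} (addrs n)"
    and "real N \<ge> log 2 (((eps2 + 2 ^ n) / 2 ^ n) powr (1 / real n) - 1) / log 2 p"
  shows "measure_pmf.prob (partition_pmf n L N p addr)
           {Ps. labellings n Ps = {map addr [0..<2 ^ n]}} \<ge> 1 - eps2"
proof -
  define D where "D = {d :: word. length d = L}"
  define f where "f i = do {d \<leftarrow> pmf_of_set D; reads_pmf p N (addr i, d)}" for i
  define \<Omega> where "\<Omega> = partition_pmf n L N p addr"
  have \<Omega>: "\<Omega> = seq_pmf (map f [0..<2 ^ n])"
    unfolding \<Omega>_def partition_pmf_def f_def D_def ..
  have bij: "bij_betw addr {..<2 ^ n} (addrs n)" by fact
  have len_addr: "length (addr i) = n" if "i < 2 ^ n" for i
    using bij_betw_apply[OF bij] that by (auto simp: addrs_def)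
  define Bad where "Bad ij = {Ps :: read multiset list. \<forall>r\<in># Ps ! fst ij. fst r ! snd ij = None}" for ij
  define I where "I = {..<(2::nat) ^ n} \<times> {..<n}"
  define Good where "Good = {Ps :: read multiset list. \<forall>i<2 ^ n. \<forall>j<n. \<exists>r\<in># Ps ! i. fst r ! j \<noteq> None}"
  have supp: "length Ps = 2 ^ n \<and> (\<forall>i<2 ^ n. \<forall>r\<in># Ps ! i. list_all2 (\<lambda>a b. b = None \<or> b = Some a) (addr i) (fst r))"
    if "Ps \<in> set_pmf \<Omega>" for Ps
  proof -
    from set_seq_pmf[OF that[unfolded \<Omega>]]
    have h: "length Ps = 2 ^ n" "\<forall>i<2 ^ n. Ps ! i \<in> set_pmf (f i)" by auto
    show ?thesis
    proof (intro conjI allI impI ballI)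
      fix i r assume "i < 2 ^ n" "r \<in># Ps ! i"
      moreover obtain d where "Ps ! i \<in> set_pmf (reads_pmf p N (addr i, d))"
        using h(2) \<open>i < 2 ^ n\<close> by (auto simp: f_def)
      ultimately show "list_all2 (\<lambda>a b. b = None \<or> b = Some a) (addr i) (fst r)"
        using set_reads by blast
    qed (use h in auto)
  qed
  have sub: "Good \<inter> set_pmf \<Omega> \<subseteq> {Ps. labellings n Ps = {map addr [0..<2 ^ n]}}"
  proof
    fix Ps assume "Ps \<in> Good \<inter> set_pmf \<Omega>"
    then have G: "\<forall>i<2 ^ n. \<forall>j<n. \<exists>r\<in># Ps ! i. fst r ! j \<noteq> None"
      and S: "length Ps = 2 ^ n" "\<forall>i<2 ^ n. \<forall>r\<in># Ps ! i. list_all2 (\<lambda>a b. b = None \<or> b = Some a) (addr i) (fst r)"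
      using supp by (auto simp: Good_def)
    have "labellings n Ps = {map addr [0..<2 ^ n]}"
    proof (intro equalityI subsetI)
      fix Lab assume "Lab \<in> labellings n Ps"
      then have Lab: "length Lab = 2 ^ n" "set Lab \<subseteq> addrs n"
        "\<forall>i < 2 ^ n. \<forall>r \<in># Ps ! i. compatible (Lab ! i) r"
        by (auto simp: labellings_def)
      have "Lab ! i = addr i" if i: "i < 2 ^ n" for i
      proof (rule unique_addr[where n = n and M = "Ps ! i"])
        show "length (Lab ! i) = n" using Lab(1,2) i nth_mem[of i Lab] unfolding addrs_def by force
        show "length (addr i) = n" using len_addr i .
        show "\<forall>j<n. \<exists>r\<in>#Ps ! i. fst r ! j \<noteq> None" using G i by blast
        show "\<forall>r\<in>#Ps ! i. list_all2 (\<lambda>a b. b = None \<or> b = Some a) (addr i) (fst r)" using S i by blast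
        show "\<forall>r\<in>#Ps ! i. list_all2 (\<lambda>a b. b = None \<or> b = Some a) (Lab ! i) (fst r)"
          using Lab(3) i by (auto simp: compatible_def)
      qed
      then show "Lab \<in> {map addr [0..<2 ^ n]}"
        using Lab(1) by (auto intro!: nth_equalityI)
    next
      fix Lab assume "Lab \<in> {map addr [0..<2 ^ n]}"
      then have Lab: "Lab = map addr [0..<2 ^ n]" by simp
      have inj: "inj_on addr (set [0..<2 ^ n])"
        using bij_betw_imp_inj_on[OF bij] by (simp add: lessThan_atLeast0)
      have "set Lab \<subseteq> addrs n"
        using bij_betw_apply[OF bij] by (auto simp: Lab)
      moreover have "distinct Lab" using inj by (simp add: Lab distinct_map)
      moreover have "\<forall>i < 2 ^ n. \<forall>r \<in># Ps ! i. compatible (Lab ! i) r"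
        using S(2) by (auto simp: Lab compatible_def)
      ultimately show "Lab \<in> labellings n Ps" by (simp add: labellings_def Lab)
    qed
    then show "Ps \<in> {Ps. labellings n Ps = {map addr [0..<2 ^ n]}}" by simp
  qed
  have pbad: "measure_pmf.prob \<Omega> (Bad ij) = p ^ N" if ijI: "ij \<in> I" for ij
  proof -
    obtain i j where ij: "ij = (i, j)" "i < 2 ^ n" "j < n" using ijI by (auto simp: I_def)
    have "map_pmf (\<lambda>Ps. Ps ! i) \<Omega> = f i" using ij by (simp add: \<Omega> seq_pmf_nth)
    moreover have "Bad ij = (\<lambda>Ps. Ps ! i) -` {M. \<forall>r\<in># M. fst r ! j = None}"
      by (auto simp: Bad_def ij(1))
    ultimately have "measure_pmf.prob \<Omega> (Bad ij) = measure_pmf.prob (f i) {M. \<forall>r\<in># M. fst r ! j = None}"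
      using measure_map_pmf[of "\<lambda>Ps. Ps ! i" \<Omega> "{M. \<forall>r\<in># M. fst r ! j = None}"] by simp
    also have "\<dots> = measure_pmf.prob (map_pmf (\<lambda>M. \<forall>r\<in># M. fst r ! j = None) (f i)) {True}"
      by (simp add: vimage_def)
    also have "map_pmf (\<lambda>M. \<forall>r\<in># M. fst r ! j = None) (f i) = bernoulli_pmf (p ^ N)"
      unfolding f_def map_bind_pmf
      using reads_bad[of p j "addr i" N] assms(4,5) len_addr[OF ij(2)] ij(3) by simp
    also have "measure_pmf.prob (bernoulli_pmf (p ^ N)) {True} = p ^ N"
      using assms(4,5) by (simp add: measure_pmf_single power_le_one)
    finally show ?thesis .
  qed
  have compl: "UNIV - Good = (\<Union>ij\<in>I. Bad ij)"
    unfolding Good_def Bad_def I_def by (auto; metis option.distinct(1))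
  have "measure_pmf.prob \<Omega> (UNIV - Good) \<le> (\<Sum>ij\<in>I. measure_pmf.prob \<Omega> (Bad ij))"
    unfolding compl by (rule measure_pmf.finite_measure_subadditive_finite) (auto simp: I_def)
  also have "\<dots> = (\<Sum>ij\<in>I. p ^ N)" using pbad by simp
  also have "\<dots> = 2 ^ n * real n * p ^ N" by (simp add: I_def card_cartesian_product)
  also have "\<dots> \<le> eps2" using arith_part[OF assms(1,4,5,6,9)] .
  finally have "measure_pmf.prob \<Omega> (UNIV - Good) \<le> eps2" .
  then have "1 - eps2 \<le> measure_pmf.prob \<Omega> Good"
    using measure_pmf.prob_compl[of Good \<Omega>] by simp
  also have "\<dots> = measure_pmf.prob \<Omega> (Good \<inter> set_pmf \<Omega>)" by (simp add: measure_Int_set_pmf)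
  also have "\<dots> \<le> measure_pmf.prob \<Omega> {Ps. labellings n Ps = {map addr [0..<2 ^ n]}}"
    using sub by (intro measure_pmf.finite_measure_mono) auto
  finally show ?thesis unfolding \<Omega>_def .
qed
end
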